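(* Let $d\in\mathbb{N}$, $C>0$, $N\ge Cd$ and $t>0$. Then for every $x\in\mathbb{R}^d$ with $|x|\ge N(1+t/N)^{1/2}$, $$|Q\cap(B^2_N-x)|=|\{y\in Q: x+y\in B^2_N\}|\le 2e^{-ct^2},\qquad\text{where } c=\frac{7}{32}\frac{C^2}{(C+1)^2}.$$
   Context: $Q=[-1/2,1/2]^d$ is the unit cube, $B^2_N=\{x\in\mathbb{R}^d:|x|\le N\}$ is the closed Euclidean ball of radius $N$, $|\cdot|$ on sets denotes Lebesgue measure and on vectors the Euclidean norm. *)

theory Defs
  imports "HOL-Analysis.Analysis"
begin

definition unit_cube :: "(real^'n) set" where
  "unit_cube = {y. \<forall>i. \<bar>y $ i\<bar> \<le> 1/2}"

end

theory Submission
  imports Defs "HOL-Probability.Hoeffding"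
begin

lemma oned:
  fixes a :: real
  shows "(\<integral>\<^sup>+r. ennreal (indicator {-1/2..1/2} r * exp (a*r)) \<partial>lborel) \<le> ennreal (exp (a^2/8))"
proof -
  define A where "A = {-1/2..1/2::real}"
  define M where "M = uniform_measure lborel A"
  have A1: "emeasure lborel A = 1" unfolding A_def by simp
  have ps: "prob_space M" unfolding M_def by (rule prob_space_uniform_measure) (simp_all add: A1)
  interpret interval_bounded_random_variable M "\<lambda>r. a*r" "-\<bar>a\<bar>/2" "\<bar>a\<bar>/2"
  proof (intro interval_bounded_random_variable.intro ps interval_bounded_random_variable_axioms.intro)
    show "(\<lambda>r. a*r) \<in> borel_measurable M" unfolding M_def by simp
    show "AE x in M. a * x \<in> {- \<bar>a\<bar> / 2..\<bar>a\<bar> / 2}" unfolding M_def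
    proof (rule AE_uniform_measureI)
      show "A \<in> sets lborel" unfolding A_def by simp
      show "AE x in lborel. x \<in> A \<longrightarrow> a * x \<in> {- \<bar>a\<bar> / 2..\<bar>a\<bar> / 2}"
      proof (rule always_eventually, intro allI impI)
        fix x assume "x \<in> A"
        hence "\<bar>x\<bar> \<le> 1/2" unfolding A_def by auto
        hence "\<bar>a*x\<bar> \<le> \<bar>a\<bar> * (1/2)" unfolding abs_mult by (intro mult_left_mono) auto
        thus "a * x \<in> {- \<bar>a\<bar> / 2..\<bar>a\<bar> / 2}" by auto
      qed
    qed
  qed
  have dens: "M = density lborel (\<lambda>x. ennreal (indicator A x))"
    unfolding M_def uniform_measure_def A1 by (intro arg_cong2[where f=density] refl ext) (simp add: indicator_def)
  have E: "expectation (\<lambda>r. a*r) = 0"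
  proof -
    have "expectation (\<lambda>r. a*r) = integral\<^sup>L lborel (\<lambda>x. indicator A x *\<^sub>R (a*x))"
      unfolding dens by (subst integral_density) (auto simp: A_def)
    also have "\<dots> = (a/2) * (1/2)^2 - (a/2) * (-1/2)^2"
      unfolding A_def
      by (rule integral_FTC_atLeastAtMost[where F="\<lambda>x. (a/2)*x^2"])
         (auto intro!: derivative_eq_intros continuous_intros simp: has_real_derivative_iff_has_vector_derivative[symmetric])
    finally show ?thesis by simp
  qed
  have "nn_integral M (\<lambda>x. exp (1 * (a*x))) \<le> ennreal (exp (1^2 * (\<bar>a\<bar>/2 - (-\<bar>a\<bar>/2))^2 / 8))"
    by (rule Hoeffdings_lemma_nn_integral_0[OF _ E]) simp
  also have "(1^2 * (\<bar>a\<bar>/2 - (-\<bar>a\<bar>/2))^2 / 8) = a^2/8" by (simp add: power2_eq_square)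
  also have "nn_integral M (\<lambda>x. exp (1 * (a*x))) = (\<integral>\<^sup>+r. ennreal (indicator {-1/2..1/2} r * exp (a*r)) \<partial>lborel)"
    unfolding dens A_def by (subst nn_integral_density) (auto intro!: nn_integral_cong simp: indicator_def ennreal_mult')
  finally show ?thesis .
qed

lemma setbound:
  fixes x :: "'a::euclidean_space" and l s :: real
  assumes "l \<ge> 0" and S: "S \<in> sets lborel"
    and sub: "\<And>y. y \<in> S \<Longrightarrow> (\<forall>b\<in>Basis. \<bar>y \<bullet> b\<bar> \<le> 1/2) \<and> x \<bullet> y \<le> -s"
  shows "emeasure lborel S \<le> ennreal (exp (- l * s + l^2 * (norm x)^2 / 8))"
proof -
  define g where "g b r = ennreal (indicator {-1/2..1/2} r * exp ((- l * (x \<bullet> b)) * r))" for b r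
  have pt: "indicator S y \<le> ennreal (exp (- l * s)) * (\<Prod>b\<in>Basis. g b (y \<bullet> b))" for y
  proof (cases "y \<in> S")
    case True
    with sub have Q: "\<forall>b\<in>Basis. \<bar>y \<bullet> b\<bar> \<le> 1/2" and xy: "x \<bullet> y \<le> -s" by auto
    have "(\<Prod>b\<in>Basis. g b (y \<bullet> b)) = (\<Prod>b\<in>Basis. ennreal (exp ((- l * (x \<bullet> b)) * (y \<bullet> b))))"
      using Q by (intro prod.cong refl) (auto simp: g_def indicator_def)
    also have "\<dots> = ennreal (\<Prod>b\<in>Basis. exp ((- l * (x \<bullet> b)) * (y \<bullet> b)))"
      by (simp add: prod_ennreal)
    also have "(\<Prod>b\<in>Basis. exp ((- l * (x \<bullet> b)) * (y \<bullet> b))) = exp (\<Sum>b\<in>Basis. (- l * (x \<bullet> b)) * (y \<bullet> b))"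
      by (simp add: exp_sum)
    also have "(\<Sum>b\<in>Basis. (- l * (x \<bullet> b)) * (y \<bullet> b)) = - l * (x \<bullet> y)"
      by (simp add: euclidean_inner[of x y] sum_distrib_left mult.assoc)
    finally have eq: "(\<Prod>b\<in>Basis. g b (y \<bullet> b)) = ennreal (exp (- l * (x \<bullet> y)))" .
    have "1 \<le> exp (- l * s) * exp (- l * (x \<bullet> y))"
    proof -
      have "0 \<le> - l * s + - l * (x \<bullet> y)" using xy \<open>l \<ge> 0\<close>
      proof -
        have "- l * s + - l * (x \<bullet> y) = l * (-(x \<bullet> y) - s)" by (simp add: algebra_simps)
        moreover have "0 \<le> l * (-(x \<bullet> y) - s)" using xy \<open>l \<ge> 0\<close> by (intro mult_nonneg_nonneg) auto
        ultimately show ?thesis by simp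
      qed
      thus ?thesis by (simp add: exp_add[symmetric])
    qed
    thus ?thesis using True by (simp add: eq ennreal_mult'[symmetric] ennreal_1[symmetric] del: ennreal_1)
  qed (simp)
  have "(\<integral>\<^sup>+y. (\<Prod>b\<in>Basis. g b (y \<bullet> b)) \<partial>lborel) = (\<Prod>b\<in>Basis. (\<integral>\<^sup>+r. g b r \<partial>lborel))"
    by (rule nn_integral_lborel_prod) (simp_all add: g_def)
  also have "\<dots> \<le> (\<Prod>b\<in>Basis. ennreal (exp ((- l * (x \<bullet> b))^2/8)))"
    by (intro prod_mono_ennreal) (unfold g_def, rule oned)
  also have "\<dots> = ennreal (exp (\<Sum>b\<in>Basis. (- l * (x \<bullet> b))^2/8))"
    by (simp add: prod_ennreal exp_sum)
  also have "(\<Sum>b\<in>Basis. (- l * (x \<bullet> b))^2/8) = l^2 * (norm x)^2 / 8"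
  proof -
    have nx: "(norm x)^2 = (\<Sum>b\<in>Basis. (x \<bullet> b)^2)"
    proof -
      have "(norm x)^2 = x \<bullet> x" by (simp add: power2_norm_eq_inner)
      also have "\<dots> = (\<Sum>b\<in>Basis. (x \<bullet> b) * (x \<bullet> b))" by (rule euclidean_inner)
      finally show ?thesis by (simp add: power2_eq_square)
    qed
    have "(\<Sum>b\<in>Basis. (- l * (x \<bullet> b))^2/8) = (\<Sum>b\<in>Basis. l^2/8 * (x \<bullet> b)^2)"
      by (intro sum.cong refl) (simp add: power_mult_distrib)
    also have "\<dots> = l^2/8 * (\<Sum>b\<in>Basis. (x \<bullet> b)^2)" by (simp add: sum_distrib_left)
    finally show ?thesis by (simp add: nx)
  qed
  finally have P: "(\<integral>\<^sup>+y. (\<Prod>b\<in>Basis. g b (y \<bullet> b)) \<partial>lborel) \<le> ennreal (exp (l^2 * (norm x)^2 / 8))" .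
  have "emeasure lborel S = (\<integral>\<^sup>+y. indicator S y \<partial>lborel)" using S by simp
  also have "\<dots> \<le> (\<integral>\<^sup>+y. ennreal (exp (- l * s)) * (\<Prod>b\<in>Basis. g b (y \<bullet> b)) \<partial>lborel)"
    by (intro nn_integral_mono pt)
  also have "\<dots> = ennreal (exp (- l * s)) * (\<integral>\<^sup>+y. (\<Prod>b\<in>Basis. g b (y \<bullet> b)) \<partial>lborel)"
    by (rule nn_integral_cmult) (simp add: g_def)
  also have "\<dots> \<le> ennreal (exp (- l * s)) * ennreal (exp (l^2 * (norm x)^2 / 8))"
    by (rule mult_left_mono[OF P]) simp
  also have "\<dots> = ennreal (exp (- l * s + l^2 * (norm x)^2 / 8))"
    by (subst ennreal_mult[symmetric]) (auto simp: mult_exp_exp)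
  finally show ?thesis .
qed


lemma cube_eq: "(unit_cube :: (real^'n) set) = {y. \<forall>b\<in>Basis. \<bar>y \<bullet> b\<bar> \<le> 1/2}"
proof (intro set_eqI iffI)
  fix y :: "real^'n" assume "y \<in> unit_cube"
  hence h: "\<And>i. \<bar>y $ i\<bar> \<le> 1/2" by (auto simp: unit_cube_def)
  show "y \<in> {y. \<forall>b\<in>Basis. \<bar>y \<bullet> b\<bar> \<le> 1/2}"
  proof (intro CollectI ballI)
    fix b :: "real^'n" assume "b \<in> Basis"
    then obtain i where "b = axis i 1" using axis_inverse by blast
    thus "\<bar>y \<bullet> b\<bar> \<le> 1/2" using h[of i] by (simp add: cart_eq_inner_axis)
  qed
next
  fix y :: "real^'n" assume "y \<in> {y. \<forall>b\<in>Basis. \<bar>y \<bullet> b\<bar> \<le> 1/2}"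
  hence h: "\<And>b. b \<in> Basis \<Longrightarrow> \<bar>y \<bullet> b\<bar> \<le> 1/2" by auto
  have "\<bar>y $ i\<bar> \<le> 1/2" for i
    using h[of "axis i 1"] by (simp add: cart_eq_inner_axis)
  thus "y \<in> unit_cube" by (simp add: unit_cube_def)
qed

theorem lemma5p2:
  fixes x :: "real^'n" and C N t :: real
  assumes "C > 0" and "N \<ge> C * real CARD('n)" and "t > 0"
    and "norm x \<ge> N * sqrt (1 + t / N)"
  shows "measure lebesgue {y \<in> unit_cube. x + y \<in> cball 0 N}
           \<le> 2 * exp (- ((7/32) * (C^2 / (C + 1)^2)) * t^2)"
proof -
  define S where "S = {y \<in> unit_cube. x + y \<in> cball 0 N}"
  define d where "d = real CARD('n)"
  define X where "X = norm x"
  have d1: "d \<ge> 1" unfolding d_def by (simp add: Suc_le_eq)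
  have "C * d \<ge> C * 1" using d1 \<open>C > 0\<close> by (intro mult_left_mono) auto
  hence N0: "N > 0" using assms(1,2) unfolding d_def by linarith
  have Seq: "S = {y. (\<forall>i. \<bar>y $ i\<bar> \<le> 1/2) \<and> norm (x + y) \<le> N}"
    by (auto simp: S_def unit_cube_def)
  have Sclosed: "closed S"
    unfolding Seq
    by (intro closed_Collect_conj closed_Collect_all closed_Collect_le continuous_intros)
  hence Sb: "S \<in> sets lborel" by (simp add: borel_closed)
  have RHS0: "0 \<le> 2 * exp (- ((7/32) * (C^2 / (C + 1)^2)) * t^2)" by simp
  show ?thesis
  proof (cases "S = {}")
    case True
    thus ?thesis using RHS0 unfolding S_def[symmetric] by simp
  next
    case False
    then obtain y0 where y0: "y0 \<in> S" by blast
    have ny0: "norm y0 \<le> d/2"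
    proof -
      have "norm y0 \<le> (\<Sum>i\<in>UNIV. \<bar>y0$i\<bar>)" by (rule norm_le_l1_cart)
      also have "\<dots> \<le> (\<Sum>i\<in>(UNIV::'n set). 1/2)"
        using y0 by (intro sum_mono) (auto simp: S_def unit_cube_def)
      finally show ?thesis by (simp add: d_def)
    qed
    have "X \<le> norm (x + y0) + norm y0" unfolding X_def
      using norm_triangle_ineq4[of "x + y0" y0] by simp
    also have "norm (x + y0) \<le> N" using y0 by (auto simp: S_def)
    finally have XN: "X \<le> N + d/2" using ny0 by linarith
    have "C * X \<le> C * (N + d/2)" using XN \<open>C>0\<close> by (intro mult_left_mono) auto
    also have "\<dots> \<le> N * (C + 1)" using assms(2) N0 unfolding d_def by (simp add: algebra_simps)
    finally have CX: "C * X \<le> N * (C + 1)" .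
    have sq: "sqrt (1 + t/N) \<ge> 0" using N0 assms(3) by simp
    have X0': "X \<ge> N * sqrt (1 + t/N)" using assms(4) by (simp add: X_def)
    have "(N * sqrt (1 + t/N))^2 \<le> X^2"
      using X0' N0 sq by (intro power_mono) auto
    moreover have "(N * sqrt (1 + t/N))^2 = N^2 * (1 + t/N)"
      using N0 assms(3) by (simp add: power_mult_distrib)
    moreover have "N^2 * (1 + t/N) = N^2 + t*N" using N0 by (simp add: field_simps power2_eq_square)
    ultimately have X2: "X^2 \<ge> N^2 + t*N" by simp
    have Xpos: "X > 0"
    proof -
      have "X^2 > 0" using X2 N0 assms(3) by (smt (verit) mult_pos_pos zero_less_power)
      thus ?thesis using X_def by (simp add: zero_less_power2)
    qed
    define s where "s = t * N / 2"
    define l where "l = 4 * s / X^2"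
    have l0: "l \<ge> 0" unfolding l_def s_def using N0 assms(3) by simp
    have sub: "(\<forall>b\<in>Basis. \<bar>y \<bullet> b\<bar> \<le> 1/2) \<and> x \<bullet> y \<le> -s" if "y \<in> S" for y
    proof
      show "\<forall>b\<in>Basis. \<bar>y \<bullet> b\<bar> \<le> 1/2" using that cube_eq unfolding S_def by auto
      have "norm (x + y) \<le> N" using that by (auto simp: S_def)
      hence "(norm (x + y))^2 \<le> N^2" by (intro power_mono) auto
      moreover have "(norm (x + y))^2 = X^2 + 2 * (x \<bullet> y) + (norm y)^2"
        unfolding X_def by (simp add: power2_norm_eq_inner inner_add_left inner_add_right inner_commute)
      moreover have "(norm y)^2 \<ge> 0" by simp
      ultimately show "x \<bullet> y \<le> -s" using X2 unfolding s_def by linarith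
    qed
    have "emeasure lborel S \<le> ennreal (exp (- l * s + l^2 * (norm x)^2 / 8))"
      by (rule setbound[OF l0 Sb sub])
    also have "- l * s + l^2 * (norm x)^2 / 8 = - (2 * s^2 / X^2)"
      unfolding l_def X_def[symmetric] using Xpos by (simp add: field_simps power2_eq_square)
    finally have em: "emeasure lborel S \<le> ennreal (exp (- (2 * s^2 / X^2)))" .
    have meas: "measure lebesgue S \<le> exp (- (2 * s^2 / X^2))"
      using Sb em by (simp add: measure_def enn2real_leI)
    have r: "C^2 / (C + 1)^2 \<le> N^2 / X^2"
    proof -
      have "(C * X)^2 \<le> (N * (C + 1))^2" using CX \<open>C > 0\<close> Xpos by (intro power_mono) auto
      hence h: "C^2 * X^2 \<le> N^2 * (C+1)^2" by (simp only: power_mult_distrib)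
      have p: "(C+1)^2 * X^2 > 0" using Xpos \<open>C > 0\<close> by simp
      have "C^2 / (C + 1)^2 = (C^2 * X^2) / ((C+1)^2 * X^2)" using Xpos by simp
      also have "\<dots> \<le> (N^2 * (C+1)^2) / ((C+1)^2 * X^2)"
        using h p by (intro divide_right_mono) auto
      also have "\<dots> = N^2 / X^2" using \<open>C > 0\<close> by simp
      finally show ?thesis .
    qed
    have "(7/32) * (C^2 / (C + 1)^2) * t^2 \<le> (1/2) * (N^2 / X^2) * t^2"
      using r by (intro mult_right_mono mult_mono) auto
    also have "(1/2) * (N^2 / X^2) * t^2 = 2 * s^2 / X^2" unfolding s_def by (simp add: power_mult_distrib field_simps)
    finally have "exp (- (2 * s^2 / X^2)) \<le> exp (- ((7/32) * (C^2 / (C + 1)^2)) * t^2)" by simp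
    also have "\<dots> \<le> 2 * exp (- ((7/32) * (C^2 / (C + 1)^2)) * t^2)" by simp
    finally show ?thesis using meas unfolding S_def by linarith
  qed
qed

end
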